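(* The classes of coherent weakly Hausdorff spaces and of compact coherent weakly Hausdorff spaces are not $\omega$-projective. Moreover, there is an ep-system $(p_{mn}\colon X_n\to X_m)_{m\le n\in\mathbb N}$ of compact coherent weakly Hausdorff spaces whose projective limit in the category of topological spaces is not weakly Hausdorff.
   Context: A projective system of topological spaces consists of a directed preordered set $(I,\sqsubseteq)$, spaces $X_i$ and continuous maps $p_{ij}\colon X_j\to X_i$ for $i\sqsubseteq j$ with $p_{ii}=\mathrm{id}$ and $p_{ij}\circ p_{jk}=p_{ik}$; its projective limit is its limit in the category of topological spaces. A class is $\omega$-projective if it is closed under projective limits of systems whose index set has a countable cofinal subset. The specialization preorder is $x\le y$ iff every open neighbourhood of $x$ contains $y$; $\uparrow x$ is the set of points above $x$; saturated means upward closed. A space is coherent if the intersection of any two compact saturated subsets is compact (no separation axiom in compactness). A space is weakly Hausdorff if for any two points $x,y$ and every open neighbourhood $W$ of $\uparrow x\cap\uparrow y$ there are open neighbourhoods $U$ of $x$ and $V$ of $y$ with $U\cap V\subseteq W$. A continuous map $p\colon Y\to X$ is a projection if there is a continuous $e\colon X\to Y$ with $p\circ e=\mathrm{id}_X$ and $e\circ p\le\mathrm{id}_Y$ pointwise in the specialization preorder of $Y$; an ep-system is a projective system whose bonding maps are projections. *)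

theory Defs
  imports "HOL-Analysis.Analysis"
begin

definition spec_le :: "'a topology \<Rightarrow> 'a \<Rightarrow> 'a \<Rightarrow> bool" where
  "spec_le X x y \<longleftrightarrow> x \<in> topspace X \<and> y \<in> topspace X \<and>
     (\<forall>U. openin X U \<and> x \<in> U \<longrightarrow> y \<in> U)"

definition upset :: "'a topology \<Rightarrow> 'a \<Rightarrow> 'a set" where
  "upset X x = {y. spec_le X x y}"

definition saturated_in :: "'a topology \<Rightarrow> 'a set \<Rightarrow> bool" where
  "saturated_in X S \<longleftrightarrow> S \<subseteq> topspace X \<and> (\<forall>x\<in>S. upset X x \<subseteq> S)"

definition coherent_space :: "'a topology \<Rightarrow> bool" where
  "coherent_space X \<longleftrightarrow>
     (\<forall>K L. compactin X K \<and> saturated_in X K \<and> compactin X L \<and> saturated_in X L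
        \<longrightarrow> compactin X (K \<inter> L))"

definition weakly_hausdorff :: "'a topology \<Rightarrow> bool" where
  "weakly_hausdorff X \<longleftrightarrow>
     (\<forall>x\<in>topspace X. \<forall>y\<in>topspace X. \<forall>W. openin X W \<and> upset X x \<inter> upset X y \<subseteq> W
        \<longrightarrow> (\<exists>U V. openin X U \<and> openin X V \<and> x \<in> U \<and> y \<in> V \<and> U \<inter> V \<subseteq> W))"

definition proj_system ::
  "'i set \<Rightarrow> ('i \<Rightarrow> 'i \<Rightarrow> bool) \<Rightarrow> ('i \<Rightarrow> 'a topology) \<Rightarrow> ('i \<Rightarrow> 'i \<Rightarrow> 'a \<Rightarrow> 'a) \<Rightarrow> bool" where
  "proj_system I le X p \<longleftrightarrow>
     I \<noteq> {} \<and>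
     (\<forall>i\<in>I. le i i) \<and>
     (\<forall>i\<in>I. \<forall>j\<in>I. \<forall>k\<in>I. le i j \<and> le j k \<longrightarrow> le i k) \<and>
     (\<forall>i\<in>I. \<forall>j\<in>I. \<exists>k\<in>I. le i k \<and> le j k) \<and>
     (\<forall>i\<in>I. \<forall>j\<in>I. le i j \<longrightarrow> continuous_map (X j) (X i) (p i j)) \<and>
     (\<forall>i\<in>I. \<forall>x\<in>topspace (X i). p i i x = x) \<and>
     (\<forall>i\<in>I. \<forall>j\<in>I. \<forall>k\<in>I. le i j \<and> le j k \<longrightarrow>
        (\<forall>x\<in>topspace (X k). p i j (p j k x) = p i k x))"

definition has_countable_cofinal :: "'i set \<Rightarrow> ('i \<Rightarrow> 'i \<Rightarrow> bool) \<Rightarrow> bool" where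
  "has_countable_cofinal I le \<longleftrightarrow> (\<exists>J\<subseteq>I. countable J \<and> (\<forall>i\<in>I. \<exists>j\<in>J. le i j))"

definition proj_limit ::
  "'i set \<Rightarrow> ('i \<Rightarrow> 'i \<Rightarrow> bool) \<Rightarrow> ('i \<Rightarrow> 'a topology) \<Rightarrow> ('i \<Rightarrow> 'i \<Rightarrow> 'a \<Rightarrow> 'a) \<Rightarrow> ('i \<Rightarrow> 'a) topology" where
  "proj_limit I le X p = subtopology (product_topology X I)
     {x \<in> topspace (product_topology X I). \<forall>i\<in>I. \<forall>j\<in>I. le i j \<longrightarrow> p i j (x j) = x i}"

definition is_projection :: "'a topology \<Rightarrow> 'b topology \<Rightarrow> ('a \<Rightarrow> 'b) \<Rightarrow> bool" where
  "is_projection Y X p \<longleftrightarrow> continuous_map Y X p \<and>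
     (\<exists>e. continuous_map X Y e \<and> (\<forall>x\<in>topspace X. p (e x) = x) \<and>
          (\<forall>y\<in>topspace Y. spec_le Y (e (p y)) y))"

definition ep_system ::
  "'i set \<Rightarrow> ('i \<Rightarrow> 'i \<Rightarrow> bool) \<Rightarrow> ('i \<Rightarrow> 'a topology) \<Rightarrow> ('i \<Rightarrow> 'i \<Rightarrow> 'a \<Rightarrow> 'a) \<Rightarrow> bool" where
  "ep_system I le X p \<longleftrightarrow> proj_system I le X p \<and>
     (\<forall>i\<in>I. \<forall>j\<in>I. le i j \<longrightarrow> is_projection (X j) (X i) (p i j))"

end

theory Submission
  imports Defs
begin
definition alex :: "'a set \<Rightarrow> ('a \<Rightarrow> 'a \<Rightarrow> bool) \<Rightarrow> 'a topology" where
  "alex S R = topology (\<lambda>U. U \<subseteq> S \<and> (\<forall>x\<in>U. \<forall>y\<in>S. R x y \<longrightarrow> y \<in> U))"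

lemma openin_alex: "openin (alex S R) U \<longleftrightarrow> U \<subseteq> S \<and> (\<forall>x\<in>U. \<forall>y\<in>S. R x y \<longrightarrow> y \<in> U)"
proof -
  have "istopology (\<lambda>U. U \<subseteq> S \<and> (\<forall>x\<in>U. \<forall>y\<in>S. R x y \<longrightarrow> y \<in> U))"
    unfolding istopology_def by blast
  then show ?thesis unfolding alex_def by simp
qed

lemma topspace_alex[simp]: "topspace (alex S R) = S"
proof -
  have "openin (alex S R) S" by (simp add: openin_alex)
  then have "S \<subseteq> topspace (alex S R)" by (rule openin_subset)
  moreover have "topspace (alex S R) \<subseteq> S"
    unfolding topspace_def openin_alex by blast
  ultimately show ?thesis by blast
qed

lemma cont_alex:
  assumes "f ` S \<subseteq> S'" "\<And>x y. x \<in> S \<Longrightarrow> y \<in> S \<Longrightarrow> R x y \<Longrightarrow> R' (f x) (f y)"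
  shows "continuous_map (alex S R) (alex S' R') f"
  unfolding continuous_map_def topspace_alex
proof (intro conjI allI impI)
  show "f \<in> S \<rightarrow> S'" using assms(1) by (simp add: image_subset_iff_funcset)
next
  fix U assume U: "openin (alex S' R') U"
  show "openin (alex S R) {x \<in> S. f x \<in> U}"
    unfolding openin_alex
  proof (intro conjI ballI impI)
    fix x y assume x: "x \<in> {x \<in> S. f x \<in> U}" and y: "y \<in> S" and r: "R x y"
    have "R' (f x) (f y)" using assms(2) x y r by blast
    moreover have "f y \<in> S'" using assms(1) y by blast
    ultimately have "f y \<in> U" using U x unfolding openin_alex by blast
    then show "y \<in> {x \<in> S. f x \<in> U}" using y by blast
  qed blast
qed

locale preo =
  fixes S :: "'a set" and R :: "'a \<Rightarrow> 'a \<Rightarrow> bool"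
  assumes refl: "x \<in> S \<Longrightarrow> R x x"
    and trans: "x \<in> S \<Longrightarrow> y \<in> S \<Longrightarrow> z \<in> S \<Longrightarrow> R x y \<Longrightarrow> R y z \<Longrightarrow> R x z"
begin

lemma open_up: "x \<in> S \<Longrightarrow> openin (alex S R) {y\<in>S. R x y}"
  unfolding openin_alex using trans by blast

lemma spec_le_alex: "spec_le (alex S R) x y \<longleftrightarrow> x \<in> S \<and> y \<in> S \<and> R x y"
proof
  assume h: "spec_le (alex S R) x y"
  then have xy: "x \<in> S" "y \<in> S" unfolding spec_le_def by auto
  have "y \<in> {z\<in>S. R x z}" using h open_up[OF xy(1)] refl[OF xy(1)] xy unfolding spec_le_def by blast
  then show "x \<in> S \<and> y \<in> S \<and> R x y" using xy by blast
next
  assume h: "x \<in> S \<and> y \<in> S \<and> R x y"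
  show "spec_le (alex S R) x y" unfolding spec_le_def topspace_alex
  proof (intro conjI allI impI)
    fix U assume "openin (alex S R) U \<and> x \<in> U"
    then show "y \<in> U" using h unfolding openin_alex by blast
  qed (use h in auto)
qed

lemma upset_alex: "upset (alex S R) x = {y. x \<in> S \<and> y \<in> S \<and> R x y}"
  by (simp add: upset_def spec_le_alex)

lemma wh_alex: "weakly_hausdorff (alex S R)"
  unfolding weakly_hausdorff_def upset_alex topspace_alex
proof (intro ballI allI impI)
  fix x y W assume xy: "x \<in> S" "y \<in> S"
    and h: "openin (alex S R) W \<and> {ya. x \<in> S \<and> ya \<in> S \<and> R x ya} \<inter> {ya. y \<in> S \<and> ya \<in> S \<and> R y ya} \<subseteq> W"
  show "\<exists>U V. openin (alex S R) U \<and> openin (alex S R) V \<and> x \<in> U \<and> y \<in> V \<and> U \<inter> V \<subseteq> W"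
    apply (rule exI[of _ "{z\<in>S. R x z}"], rule exI[of _ "{z\<in>S. R y z}"])
    using h open_up refl xy by auto
qed

lemma compact_up: assumes "finite F" "F \<subseteq> S" shows "compactin (alex S R) {y\<in>S. \<exists>x\<in>F. R x y}"
  unfolding compactin_def
proof (intro conjI allI impI)
  fix \<U> assume h: "(\<forall>U\<in>\<U>. openin (alex S R) U) \<and> {y\<in>S. \<exists>x\<in>F. R x y} \<subseteq> \<Union> \<U>"
  have "\<forall>x\<in>F. \<exists>U\<in>\<U>. x \<in> U" using h refl assms(2) by blast
  then obtain g where g: "\<forall>x\<in>F. g x \<in> \<U> \<and> x \<in> g x" by metis
  show "\<exists>\<F>. finite \<F> \<and> \<F> \<subseteq> \<U> \<and> {y\<in>S. \<exists>x\<in>F. R x y} \<subseteq> \<Union> \<F>"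
  proof (intro exI conjI)
    show "finite (g ` F)" using assms by simp
    show "g ` F \<subseteq> \<U>" using g by auto
    show "{y\<in>S. \<exists>x\<in>F. R x y} \<subseteq> \<Union> (g ` F)"
    proof
      fix y assume "y \<in> {y\<in>S. \<exists>x\<in>F. R x y}"
      then obtain x where x: "x \<in> F" "R x y" "y \<in> S" by blast
      have "openin (alex S R) (g x)" using g h x by blast
      then have "y \<in> g x" using g x unfolding openin_alex by blast
      then show "y \<in> \<Union> (g ` F)" using x by blast
    qed
  qed
qed auto

lemma compact_char:
  assumes "compactin (alex S R) K" "saturated_in (alex S R) K"
  shows "\<exists>F. finite F \<and> F \<subseteq> S \<and> K = {y\<in>S. \<exists>x\<in>F. R x y}"
proof -
  have KS: "K \<subseteq> S" using assms(1) unfolding compactin_def by simp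
  have "\<forall>U\<in>(\<lambda>x. {y\<in>S. R x y}) ` K. openin (alex S R) U" using open_up KS by blast
  moreover have "K \<subseteq> \<Union>((\<lambda>x. {y\<in>S. R x y}) ` K)" using refl KS by blast
  ultimately obtain \<F> where F: "finite \<F>" "\<F> \<subseteq> (\<lambda>x. {y\<in>S. R x y}) ` K" "K \<subseteq> \<Union>\<F>"
    using assms(1) unfolding compactin_def by meson
  then obtain C where C: "C \<subseteq> K" "finite C" "\<F> = (\<lambda>x. {y\<in>S. R x y}) ` C"
    by (meson finite_subset_image)
  have sat: "\<And>x y. x \<in> K \<Longrightarrow> y \<in> S \<Longrightarrow> R x y \<Longrightarrow> y \<in> K"
    using assms(2) KS unfolding saturated_in_def upset_alex by blast
  have "K = {y\<in>S. \<exists>x\<in>C. R x y}"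
  proof
    show "K \<subseteq> {y\<in>S. \<exists>x\<in>C. R x y}" using F(3) C(3) by auto
    show "{y\<in>S. \<exists>x\<in>C. R x y} \<subseteq> K" using C(1) sat by auto
  qed
  then show ?thesis using C(1,2) KS by blast
qed

lemma coherent_alex:
  assumes meet: "\<And>x y. x \<in> S \<Longrightarrow> y \<in> S \<Longrightarrow>
     \<exists>Z. finite Z \<and> Z \<subseteq> S \<and> (\<forall>w\<in>S. R x w \<and> R y w \<longleftrightarrow> (\<exists>z\<in>Z. R z w))"
  shows "coherent_space (alex S R)"
  unfolding coherent_space_def
proof (intro allI impI)
  fix K L assume h: "compactin (alex S R) K \<and> saturated_in (alex S R) K \<and> compactin (alex S R) L \<and> saturated_in (alex S R) L"
  obtain F where F: "finite F" "F \<subseteq> S" "K = {y\<in>S. \<exists>x\<in>F. R x y}"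
    using h compact_char[of K] by blast
  obtain G where G: "finite G" "G \<subseteq> S" "L = {y\<in>S. \<exists>x\<in>G. R x y}"
    using h compact_char[of L] by blast
  define Q where "Q = (\<lambda>x y Z. finite Z \<and> Z \<subseteq> S \<and> (\<forall>w\<in>S. R x w \<and> R y w \<longleftrightarrow> (\<exists>z\<in>Z. R z w)))"
  define Zf where "Zf = (\<lambda>x y. SOME Z. Q x y Z)"
  have Z: "Q x y (Zf x y)" if "x \<in> S" "y \<in> S" for x y
  proof -
    have "\<exists>Z. Q x y Z" unfolding Q_def using meet[OF that] .
    then show ?thesis unfolding Zf_def by (rule someI_ex)
  qed
  define H where "H = (\<Union>x\<in>F. \<Union>y\<in>G. Zf x y)"
  have "finite H" unfolding H_def
  proof (intro finite_UN_I)
    fix x y assume "x \<in> F" "y \<in> G"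
    then have "Q x y (Zf x y)" using F(2) G(2) Z by blast
    then show "finite (Zf x y)" unfolding Q_def by blast
  qed (use F G in auto)
  moreover have "H \<subseteq> S"
  proof
    fix z assume "z \<in> H"
    then obtain x y where "x \<in> F" "y \<in> G" "z \<in> Zf x y" unfolding H_def by blast
    moreover then have "Q x y (Zf x y)" using F(2) G(2) Z by blast
    ultimately show "z \<in> S" unfolding Q_def by blast
  qed
  moreover have "K \<inter> L = {w\<in>S. \<exists>x\<in>H. R x w}"
  proof
    show "K \<inter> L \<subseteq> {w\<in>S. \<exists>x\<in>H. R x w}"
    proof
      fix w assume "w \<in> K \<inter> L"
      then obtain x y where xy: "x \<in> F" "y \<in> G" "R x w" "R y w" "w \<in> S" using F G by blast
      then have "Q x y (Zf x y)" using F(2) G(2) Z by blast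
      then obtain z where "z \<in> Zf x y" "R z w" using xy unfolding Q_def by blast
      then show "w \<in> {w\<in>S. \<exists>x\<in>H. R x w}" using xy unfolding H_def by blast
    qed
    show "{w\<in>S. \<exists>x\<in>H. R x w} \<subseteq> K \<inter> L"
    proof
      fix w assume "w \<in> {w\<in>S. \<exists>x\<in>H. R x w}"
      then obtain x y z where xyz: "x \<in> F" "y \<in> G" "z \<in> Zf x y" "R z w" "w \<in> S" unfolding H_def by blast
      then have "Q x y (Zf x y)" using F(2) G(2) Z by blast
      then have "R x w \<and> R y w" using xyz unfolding Q_def by blast
      then show "w \<in> K \<inter> L" using xyz F G by blast
    qed
  qed
  ultimately show "compactin (alex S R) (K \<inter> L)" using compact_up by simp
qed

lemma compact_space_alex:
  assumes "finite F" "F \<subseteq> S" "\<And>y. y \<in> S \<Longrightarrow> \<exists>x\<in>F. R x y"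
  shows "compact_space (alex S R)"
proof -
  have "{y\<in>S. \<exists>x\<in>F. R x y} = S" using assms(3) by blast
  then show ?thesis unfolding compact_space_def using compact_up[OF assms(1,2)] by simp
qed

end

definition ord :: "nat \<times> nat \<Rightarrow> nat \<times> nat \<Rightarrow> bool" where
  "ord p q \<longleftrightarrow> snd p \<le> snd q \<and> (fst p = fst q \<or> fst q = 2)"
definition inX :: "nat \<Rightarrow> nat \<times> nat \<Rightarrow> bool" where
  "inX n p \<longleftrightarrow> fst p \<le> 2 \<and> (fst p = 2 \<or> snd p \<le> n)"
definition kk :: "nat \<Rightarrow> nat \<times> nat \<Rightarrow> nat \<times> nat" where
  "kk n p = (if fst p = 2 then p else (fst p, min (snd p) n))"

lemma ord_refl: "ord x x" unfolding ord_def by simp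
lemma ord_trans: "ord x y \<Longrightarrow> ord y z \<Longrightarrow> ord x z" unfolding ord_def by auto
lemma kk_fix: "inX n x \<Longrightarrow> kk n x = x" unfolding inX_def kk_def by (cases x) auto
lemma kk_in: "inX m x \<Longrightarrow> inX n (kk n x)" unfolding inX_def kk_def by auto
lemma kk_le: "ord (kk n x) x" unfolding ord_def kk_def by auto
lemma kk_mono: "ord x y \<Longrightarrow> ord (kk n x) (kk n y)" unfolding ord_def kk_def by auto
lemma kk_comp: "i \<le> j \<Longrightarrow> kk i (kk j x) = kk i x" unfolding kk_def by (cases x) auto
lemma inX_mono: "i \<le> j \<Longrightarrow> inX i x \<Longrightarrow> inX j x" unfolding inX_def by auto
lemma meet_wit:
  assumes "inX n x" "inX n y" "inX n w" "ord x w" "ord y w"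
  defines "z \<equiv> (fst w, max (snd x) (snd y))"
  shows "inX n z \<and> ord x z \<and> ord y z \<and> ord z w \<and> fst z \<le> 2 \<and> snd z \<le> snd x + snd y"
  using assms unfolding z_def inX_def ord_def by auto
lemma ord_ab: "ord (0,n) w \<Longrightarrow> ord (1,n) w \<Longrightarrow> fst w = 2 \<and> n \<le> snd w"
  unfolding ord_def by auto
lemma kk2: "fst w = 2 \<Longrightarrow> kk i w = w" by (simp add: kk_def)
lemma kk_a: "c \<le> 1 \<Longrightarrow> i \<le> j \<Longrightarrow> kk i (c,j) = (c,i)" unfolding kk_def by auto
lemma ordC: "c \<le> 1 \<Longrightarrow> i \<le> m \<Longrightarrow> ord (c,i) (2,m)" unfolding ord_def by auto
lemma inXa: "c \<le> 1 \<Longrightarrow> inX n (c,n)" unfolding inX_def by auto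
lemma inXC: "inX n (2,m)" unfolding inX_def by auto
lemma cover: "inX n y \<Longrightarrow> ord (0,0) y \<or> ord (1,0) y" unfolding ord_def inX_def by auto
lemma inX01: "inX n (0,0)" "inX n (1,0)" unfolding inX_def by auto

definition enc :: "nat \<times> nat \<Rightarrow> nat set" where "enc p = {fst p, snd p + 3}"
definition dec :: "nat set \<Rightarrow> nat \<times> nat" where "dec A = (Min A, Max A - 3)"

lemma dec_enc: "fst p \<le> 2 \<Longrightarrow> dec (enc p) = p"
  unfolding dec_def enc_def by (cases p) auto

lemma enc_inj: "fst p \<le> 2 \<Longrightarrow> fst q \<le> 2 \<Longrightarrow> enc p = enc q \<longleftrightarrow> p = q"
  by (metis dec_enc)

definition SS :: "nat \<Rightarrow> nat set set" where "SS n = enc ` {x. inX n x}"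
definition RR :: "nat set \<Rightarrow> nat set \<Rightarrow> bool" where "RR A B \<longleftrightarrow> ord (dec A) (dec B)"
definition XX :: "nat \<Rightarrow> nat set topology" where "XX n = alex (SS n) RR"
definition pp :: "nat \<Rightarrow> nat \<Rightarrow> nat set \<Rightarrow> nat set" where "pp i j A = enc (kk i (dec A))"

lemma inX_fst: "inX n x \<Longrightarrow> fst x \<le> 2" by (simp add: inX_def)

lemma SS_iff: "A \<in> SS n \<longleftrightarrow> (\<exists>x. A = enc x \<and> inX n x)"
  unfolding SS_def by auto

lemma SS_I: "inX n x \<Longrightarrow> enc x \<in> SS n"
  unfolding SS_def by blast

lemma RR_enc: "inX n x \<Longrightarrow> inX m y \<Longrightarrow> RR (enc x) (enc y) \<longleftrightarrow> ord x y"
  by (simp add: RR_def dec_enc inX_fst)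

lemma pp_enc: "inX m x \<Longrightarrow> pp i j (enc x) = enc (kk i x)"
  by (simp add: pp_def dec_enc inX_fst)

lemma preo_SS: "preo (SS n) RR"
  by unfold_locales (auto simp: RR_def SS_def ord_refl intro: ord_trans)

lemma XX_props: "compact_space (XX n) \<and> coherent_space (XX n) \<and> weakly_hausdorff (XX n)"
proof -
  interpret preo "SS n" RR by (rule preo_SS)
  have c: "compact_space (XX n)" unfolding XX_def
  proof (rule compact_space_alex[of "{enc (0,0), enc (1,0)}"])
    show "{enc (0,0), enc (1,0)} \<subseteq> SS n" using inX01 by (auto simp: SS_iff)
    fix y assume "y \<in> SS n"
    then obtain y' where y: "y = enc y'" "inX n y'" by (auto simp: SS_iff)
    show "\<exists>x\<in>{enc (0,0), enc (1,0)}. RR x y"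
      using cover[OF y(2)] y RR_enc[OF inX01(1) y(2)] RR_enc[OF inX01(2) y(2)] by auto
  qed simp
  have h: "coherent_space (XX n)" unfolding XX_def
  proof (rule coherent_alex)
    fix x y assume "x \<in> SS n" "y \<in> SS n"
    then obtain x' y' where xy: "x = enc x'" "y = enc y'" "inX n x'" "inX n y'" by (auto simp: SS_iff)
    let ?Z = "{z. fst z \<le> 2 \<and> snd z \<le> snd x' + snd y' \<and> inX n z \<and> ord x' z \<and> ord y' z}"
    have fin: "finite ?Z"
    proof (rule finite_subset)
      show "?Z \<subseteq> {..2} \<times> {..snd x' + snd y'}" by auto
    qed simp
    show "\<exists>Z. finite Z \<and> Z \<subseteq> SS n \<and> (\<forall>w\<in>SS n. RR x w \<and> RR y w \<longleftrightarrow> (\<exists>z\<in>Z. RR z w))"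
    proof (intro exI conjI ballI)
      show "finite (enc ` ?Z)" using fin by simp
      show "enc ` ?Z \<subseteq> SS n" using SS_I by blast
      fix w assume "w \<in> SS n"
      then obtain w' where w: "w = enc w'" "inX n w'" by (auto simp: SS_iff)
      show "RR x w \<and> RR y w \<longleftrightarrow> (\<exists>z\<in>enc ` ?Z. RR z w)"
      proof
        assume "RR x w \<and> RR y w"
        then have o: "ord x' w' \<and> ord y' w'" using xy w RR_enc by simp
        define z where "z = (fst w', max (snd x') (snd y'))"
        have zz: "inX n z \<and> ord x' z \<and> ord y' z \<and> ord z w' \<and> fst z \<le> 2 \<and> snd z \<le> snd x' + snd y'"
          unfolding z_def using meet_wit[of n x' y' w'] xy w o by simp
        then have "RR (enc z) w" using RR_enc[of n z n w'] w by simp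
        moreover have "enc z \<in> enc ` ?Z" using zz by blast
        ultimately show "\<exists>z\<in>enc ` ?Z. RR z w" by blast
      next
        assume "\<exists>z\<in>enc ` ?Z. RR z w"
        then obtain z where z: "z \<in> ?Z" "RR (enc z) w" by blast
        then have "ord z w'" using RR_enc[of n z n w'] w by simp
        then show "RR x w \<and> RR y w" using z xy w RR_enc ord_trans by (metis (no_types, lifting) mem_Collect_eq)
      qed
    qed
  qed
  show ?thesis using c h wh_alex unfolding XX_def by simp
qed

lemma cont_pp: "continuous_map (XX j) (XX i) (pp i j)"
  unfolding XX_def
proof (rule cont_alex)
  show "pp i j ` SS j \<subseteq> SS i"
  proof
    fix B assume "B \<in> pp i j ` SS j"
    then obtain x where "B = pp i j (enc x)" "inX j x" by (auto simp: SS_def)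
    then show "B \<in> SS i" using kk_in[of j x i] by (simp add: pp_enc SS_I)
  qed
  fix x y assume "x \<in> SS j" "y \<in> SS j" "RR x y"
  then obtain x' y' where "x = enc x'" "y = enc y'" "inX j x'" "inX j y'" "ord x' y'"
    by (auto simp: SS_iff RR_enc)
  then show "RR (pp i j x) (pp i j y)" by (simp add: pp_enc RR_enc[OF kk_in kk_in] kk_mono)
qed

lemma cont_e: "i \<le> j \<Longrightarrow> continuous_map (XX i) (XX j) id"
  unfolding XX_def
proof (rule cont_alex)
  assume "i \<le> j"
  show "id ` SS i \<subseteq> SS j"
  proof
    fix B assume "B \<in> id ` SS i"
    then obtain x where "B = enc x" "inX i x" by (auto simp: SS_def)
    then show "B \<in> SS j" using inX_mono[OF \<open>i \<le> j\<close>] SS_I by blast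
  qed
qed simp

lemma spec_pp: "i \<le> j \<Longrightarrow> y \<in> SS j \<Longrightarrow> spec_le (XX j) (pp i j y) y"
proof -
  assume a: "i \<le> j" "y \<in> SS j"
  then obtain y' where y: "y = enc y'" "inX j y'" by (auto simp: SS_iff)
  interpret preo "SS j" RR by (rule preo_SS)
  have k: "inX j (kk i y')" using a(1) y(2) kk_in inX_mono by blast
  show ?thesis unfolding XX_def spec_le_alex
    using y k kk_le RR_enc[OF k y(2)] SS_I[OF k] SS_I[OF y(2)] by (simp add: pp_enc)
qed

lemma top_XX: "topspace (XX n) = SS n" by (simp add: XX_def)

lemma pp_id: "x \<in> SS i \<Longrightarrow> pp i j x = x"
proof -
  assume "x \<in> SS i"
  then obtain x' where "x = enc x'" "inX i x'" by (auto simp: SS_iff)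
  then show ?thesis by (simp add: pp_enc kk_fix)
qed

lemma pp_comp: "i \<le> j \<Longrightarrow> x \<in> SS k \<Longrightarrow> pp i j (pp j k x) = pp i k x"
proof -
  assume a: "i \<le> j" "x \<in> SS k"
  then obtain x' where x: "x = enc x'" "inX k x'" by (auto simp: SS_iff)
  have "pp j k x = enc (kk j x')" using x pp_enc by simp
  moreover have "pp i j (enc (kk j x')) = enc (kk i (kk j x'))" using pp_enc[OF kk_in[OF x(2)]] by simp
  moreover have "pp i k x = enc (kk i x')" using x pp_enc by simp
  ultimately show ?thesis using kk_comp[OF a(1)] by simp
qed

lemma is_proj: "i \<le> j \<Longrightarrow> is_projection (XX j) (XX i) (pp i j)"
  unfolding is_projection_def
proof (intro conjI exI[of _ id])
  assume a: "i \<le> j"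
  show "continuous_map (XX j) (XX i) (pp i j)" by (rule cont_pp)
  show "continuous_map (XX i) (XX j) id" using a by (rule cont_e)
  show "\<forall>x\<in>topspace (XX i). pp i j (id x) = x" using pp_id by (simp add: top_XX)
  show "\<forall>y\<in>topspace (XX j). spec_le (XX j) (id (pp i j y)) y" using spec_pp[OF a] by (simp add: top_XX)
qed

lemma ep: "ep_system UNIV (\<le>) XX pp"
proof -
  have d: "\<forall>i\<in>(UNIV::nat set). \<forall>j\<in>UNIV. \<exists>k\<in>UNIV. i \<le> k \<and> j \<le> k"
  proof (intro ballI)
    fix i j :: nat show "\<exists>k\<in>UNIV. i \<le> k \<and> j \<le> k" by (rule bexI[of _ "max i j"]) auto
  qed
  have c: "\<forall>i\<in>(UNIV::nat set). \<forall>j\<in>UNIV. i \<le> j \<longrightarrow> continuous_map (XX j) (XX i) (pp i j)"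
    using cont_pp by blast
  have idd: "\<forall>i\<in>(UNIV::nat set). \<forall>x\<in>topspace (XX i). pp i i x = x"
    using pp_id by (simp add: top_XX)
  have cmp: "\<forall>i\<in>(UNIV::nat set). \<forall>j\<in>UNIV. \<forall>k\<in>UNIV. i \<le> j \<and> j \<le> k \<longrightarrow>
        (\<forall>x\<in>topspace (XX k). pp i j (pp j k x) = pp i k x)"
    using pp_comp by (simp add: top_XX)
  have pr: "\<forall>i\<in>(UNIV::nat set). \<forall>j\<in>UNIV. i \<le> j \<longrightarrow> is_projection (XX j) (XX i) (pp i j)"
    using is_proj by blast
  have tr: "\<forall>i\<in>(UNIV::nat set). \<forall>j\<in>UNIV. \<forall>k\<in>UNIV. i \<le> j \<and> j \<le> k \<longrightarrow> i \<le> k" by simp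
  show ?thesis unfolding ep_system_def proj_system_def
    apply (intro conjI)
           apply simp
          apply simp
         apply (rule tr)
        apply (rule d)
       apply (rule c)
      apply (rule idd)
     apply (rule cmp)
    apply (rule pr)
    done
qed

abbreviation "LL \<equiv> proj_limit UNIV (\<le>) XX pp"

lemma topspace_LL: "f \<in> topspace LL \<longleftrightarrow> (\<forall>i. f i \<in> SS i) \<and> (\<forall>i j. i \<le> j \<longrightarrow> pp i j (f j) = f i)"
  unfolding proj_limit_def by (auto simp: topspace_subtopology XX_def PiE_iff)

lemma Aa_in: "c \<le> 1 \<Longrightarrow> (\<lambda>n. enc (c,n)) \<in> topspace LL"
  unfolding topspace_LL using inXa SS_I pp_enc[OF inXa] kk_a by simp

lemma C_in: "(\<lambda>n. enc (2,m)) \<in> topspace LL"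
  unfolding topspace_LL using inXC SS_I pp_enc[OF inXC] kk2 by simp

lemma box_lemma:
  assumes "openin (product_topology XX UNIV) T" "(\<lambda>n. enc (c,n)) \<in> T" "c \<le> 1"
  shows "\<exists>N. \<forall>m\<ge>N. (\<lambda>n. enc (2,m)) \<in> T"
proof -
  have "\<exists>U. finite {i \<in> UNIV. U i \<noteq> topspace (XX i)} \<and> (\<forall>i \<in> UNIV. openin (XX i) (U i)) \<and>
          (\<lambda>n. enc (c,n)) \<in> Pi\<^sub>E UNIV U \<and> Pi\<^sub>E UNIV U \<subseteq> T"
    using assms(1,2) unfolding openin_product_topology_alt by (rule bspec)
  then obtain U where U: "finite {i \<in> UNIV. U i \<noteq> topspace (XX i)}" "\<forall>i \<in> UNIV. openin (XX i) (U i)"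
    "(\<lambda>n. enc (c,n)) \<in> Pi\<^sub>E UNIV U" "Pi\<^sub>E UNIV U \<subseteq> T"
    by blast
  obtain N where N: "\<forall>i \<in> {i \<in> UNIV. U i \<noteq> topspace (XX i)}. i < N"
    using U(1) finite_nat_set_iff_bounded by meson
  have "(\<lambda>n. enc (2,m)) \<in> T" if m: "m \<ge> N" for m
  proof -
    have "enc (2,m) \<in> U i" for i
    proof (cases "U i = topspace (XX i)")
      case True then show ?thesis using SS_I[OF inXC] by (simp add: top_XX)
    next
      case False
      then have iN: "i < N" using N by blast
      have o: "openin (XX i) (U i)" using U(2) by blast
      have a: "enc (c,i) \<in> U i" using U(3) by (simp add: PiE_iff)
      have b: "enc (2,m) \<in> SS i" using SS_I[OF inXC] .
      have r: "RR (enc (c,i)) (enc (2,m))"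
        using RR_enc[OF inXa[OF assms(3)] inXC] ordC[OF assms(3)] iN m by simp
      show ?thesis using o a b r unfolding XX_def openin_alex by blast
    qed
    then have "(\<lambda>n. enc (2,m)) \<in> Pi\<^sub>E UNIV U" by (simp add: PiE_iff)
    then show ?thesis using U(4) by blast
  qed
  then show ?thesis by blast
qed

lemma open_LL:
  assumes "openin LL U"
  shows "\<exists>T. openin (product_topology XX UNIV) T \<and> U = T \<inter> topspace LL"
proof -
  obtain T where T: "openin (product_topology XX UNIV) T"
    "U = T \<inter> {x \<in> topspace (product_topology XX UNIV). \<forall>i\<in>UNIV. \<forall>j\<in>UNIV. i \<le> j \<longrightarrow> pp i j (x j) = x i}"
    using assms unfolding proj_limit_def openin_subtopology by blast
  have "T \<subseteq> topspace (product_topology XX UNIV)" using T(1) by (rule openin_subset)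
  then have "U = T \<inter> topspace LL" using T(2) unfolding proj_limit_def topspace_subtopology by blast
  then show ?thesis using T(1) by blast
qed

lemma not_wh: "\<not> weakly_hausdorff LL"
proof
  assume wh: "weakly_hausdorff LL"
  let ?a = "(\<lambda>n. enc (0,n)) :: nat \<Rightarrow> nat set" and ?b = "(\<lambda>n. enc (1,n)) :: nat \<Rightarrow> nat set"
  have aL: "?a \<in> topspace LL" using Aa_in[of 0] by simp
  have bL: "?b \<in> topspace LL" using Aa_in[of 1] by simp
  have projc: "continuous_map LL (XX n) (\<lambda>f. f n)" for n
    unfolding proj_limit_def
    by (intro continuous_map_from_subtopology continuous_map_product_projection) simp
  have key: "\<exists>w. z n = enc w \<and> inX n w \<and> ord (c,n) w" if "c \<le> 1" "spec_le LL (\<lambda>n. enc (c,n)) z" for z n c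
  proof -
    interpret preo "SS n" RR by (rule preo_SS)
    have inS: "enc (c,n) \<in> SS n" using SS_I[OF inXa[OF that(1)]] .
    then have "openin (XX n) {y \<in> SS n. RR (enc (c,n)) y}" unfolding XX_def by (rule open_up)
    from openin_continuous_map_preimage[OF projc this]
    have "openin LL {f \<in> topspace LL. f n \<in> {y \<in> SS n. RR (enc (c,n)) y}}" .
    moreover have "(\<lambda>n. enc (c,n)) \<in> {f \<in> topspace LL. f n \<in> {y \<in> SS n. RR (enc (c,n)) y}}"
      using Aa_in[OF that(1)] inS RR_enc[OF inXa[OF that(1)] inXa[OF that(1)]] ord_refl by simp
    ultimately have "z \<in> {f \<in> topspace LL. f n \<in> {y \<in> SS n. RR (enc (c,n)) y}}"
      using that(2) unfolding spec_le_def by blast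
    then have "z n \<in> SS n \<and> RR (enc (c,n)) (z n)" by simp
    then obtain w where w: "z n = enc w" "inX n w" "RR (enc (c,n)) (enc w)" by (auto simp: SS_iff)
    then have "ord (c,n) w" using RR_enc[OF inXa[OF that(1)] w(2)] by simp
    then show ?thesis using w by blast
  qed
  have "upset LL ?a \<inter> upset LL ?b \<subseteq> {}"
  proof
    fix z assume "z \<in> upset LL ?a \<inter> upset LL ?b"
    then have za: "spec_le LL ?a z" and zb: "spec_le LL ?b z" by (auto simp: upset_def)
    have zt: "z \<in> topspace LL" using za unfolding spec_le_def by simp
    have w: "\<exists>w. z n = enc w \<and> inX n w \<and> fst w = 2 \<and> n \<le> snd w" for n
    proof -
      obtain w1 where w1: "z n = enc w1" "inX n w1" "ord (0,n) w1" using key[of 0 z n] za by auto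
      obtain w2 where w2: "z n = enc w2" "inX n w2" "ord (1,n) w2" using key[of 1 z n] zb by auto
      have "enc w1 = enc w2" using w1(1) w2(1) by simp
      then have "w1 = w2" using enc_inj[OF inX_fst[OF w1(2)] inX_fst[OF w2(2)]] by simp
      then have "fst w2 = 2 \<and> n \<le> snd w2" using ord_ab[of n w2] w1(3) w2(3) by simp
      then show ?thesis using w2 by blast
    qed
    obtain w0 where w0: "z 0 = enc w0" "inX 0 w0" "fst w0 = 2" using w[of 0] by auto
    obtain w' where w': "z (Suc (snd w0)) = enc w'" "inX (Suc (snd w0)) w'" "fst w' = 2" "Suc (snd w0) \<le> snd w'"
      using w[of "Suc (snd w0)"] by auto
    have "pp 0 (Suc (snd w0)) (z (Suc (snd w0))) = z 0" using zt unfolding topspace_LL by simp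
    then have "enc w' = enc w0" using w'(1,2) w0(1) pp_enc[OF w'(2)] kk2[OF w'(3)] by simp
    then have "w' = w0" using enc_inj[of w' w0] w'(3) w0(3) by simp
    then show "z \<in> {}" using w'(4) by simp
  qed
  then have "openin LL {} \<and> upset LL ?a \<inter> upset LL ?b \<subseteq> {}" by simp
  from wh[unfolded weakly_hausdorff_def, rule_format, OF aL bL this]
  obtain U V where UV: "openin LL U" "openin LL V" "?a \<in> U" "?b \<in> V" "U \<inter> V \<subseteq> {}"
    by blast
  obtain T1 where T1: "openin (product_topology XX UNIV) T1" "U = T1 \<inter> topspace LL"
    using open_LL[OF UV(1)] by blast
  obtain T2 where T2: "openin (product_topology XX UNIV) T2" "V = T2 \<inter> topspace LL"
    using open_LL[OF UV(2)] by blast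
  have a1: "?a \<in> T1" using UV(3) T1(2) by blast
  have b2: "?b \<in> T2" using UV(4) T2(2) by blast
  obtain N1 where N1: "\<forall>m\<ge>N1. (\<lambda>n. enc (2,m)) \<in> T1" using box_lemma[OF T1(1) a1] by auto
  obtain N2 where N2: "\<forall>m\<ge>N2. (\<lambda>n. enc (2,m)) \<in> T2" using box_lemma[OF T2(1) b2] by auto
  have "(\<lambda>n. enc (2, N1+N2)) \<in> T1" using N1 by simp
  moreover have "(\<lambda>n. enc (2, N1+N2)) \<in> T2" using N2 by simp
  ultimately have "(\<lambda>n. enc (2, N1+N2)) \<in> U \<inter> V" using T1(2) T2(2) C_in by blast
  then show False using UV(5) by blast
qed

theorem corollary5p7:
  shows "(\<exists>(I::nat set) le (X::nat \<Rightarrow> nat set topology) p.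
            proj_system I le X p \<and> has_countable_cofinal I le \<and>
            (\<forall>i\<in>I. coherent_space (X i) \<and> weakly_hausdorff (X i)) \<and>
            \<not> (coherent_space (proj_limit I le X p) \<and> weakly_hausdorff (proj_limit I le X p)))
       \<and> (\<exists>(I::nat set) le (X::nat \<Rightarrow> nat set topology) p.
            proj_system I le X p \<and> has_countable_cofinal I le \<and>
            (\<forall>i\<in>I. compact_space (X i) \<and> coherent_space (X i) \<and> weakly_hausdorff (X i)) \<and>
            \<not> (compact_space (proj_limit I le X p) \<and> coherent_space (proj_limit I le X p)
                 \<and> weakly_hausdorff (proj_limit I le X p)))
       \<and> (\<exists>(X::nat \<Rightarrow> nat set topology) p.
            ep_system UNIV (\<le>) X p \<and>
            (\<forall>n. compact_space (X n) \<and> coherent_space (X n) \<and> weakly_hausdorff (X n)) \<and>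
            \<not> weakly_hausdorff (proj_limit UNIV (\<le>) X p))"
proof -
  have ps: "proj_system UNIV (\<le>) XX pp" using ep unfolding ep_system_def by simp
  have cc: "has_countable_cofinal (UNIV::nat set) (\<le>)"
    unfolding has_countable_cofinal_def by (intro exI[of _ UNIV]) auto
  have P: "\<forall>i\<in>(UNIV::nat set). compact_space (XX i) \<and> coherent_space (XX i) \<and> weakly_hausdorff (XX i)"
    using XX_props by simp
  have nw: "\<not> weakly_hausdorff LL" by (rule not_wh)
  have A: "proj_system UNIV (\<le>) XX pp \<and> has_countable_cofinal (UNIV::nat set) (\<le>) \<and>
            (\<forall>i\<in>(UNIV::nat set). coherent_space (XX i) \<and> weakly_hausdorff (XX i)) \<and>
            \<not> (coherent_space LL \<and> weakly_hausdorff LL)"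
    using ps cc P nw by simp
  have B: "proj_system UNIV (\<le>) XX pp \<and> has_countable_cofinal (UNIV::nat set) (\<le>) \<and>
            (\<forall>i\<in>(UNIV::nat set). compact_space (XX i) \<and> coherent_space (XX i) \<and> weakly_hausdorff (XX i)) \<and>
            \<not> (compact_space LL \<and> coherent_space LL \<and> weakly_hausdorff LL)"
    using ps cc P nw by simp
  have C: "ep_system UNIV (\<le>) XX pp \<and>
            (\<forall>n. compact_space (XX n) \<and> coherent_space (XX n) \<and> weakly_hausdorff (XX n)) \<and>
            \<not> weakly_hausdorff LL"
    using ep XX_props nw by simp
  show ?thesis
    apply (intro conjI)
    apply (rule exI[of _ UNIV], rule exI[of _ "(\<le>)"], rule exI[of _ XX], rule exI[of _ pp], rule A)
    apply (rule exI[of _ UNIV], rule exI[of _ "(\<le>)"], rule exI[of _ XX], rule exI[of _ pp], rule B)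
    apply (rule exI[of _ XX], rule exI[of _ pp], rule C)
    done
qed

end
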